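(* Let $d \geq 2$ be an integer and let $G$ be a standard Gaussian random vector in $\mathbb{R}^d$ (mean zero, identity covariance). Then \[ \mathbb{P}(\|G\| > \sqrt{d}) \geq \frac{1}{33} \quad\text{and}\quad \mathbb{P}(\|G\| > \sqrt{d+2}) \geq \frac{1}{397}. \]
   Context: $\|\cdot\|$ denotes the standard Euclidean norm on $\mathbb{R}^d$. *)

theory Defs
  imports "HOL-Probability.Probability"
begin

end

theory Submission
  imports Defs
begin


lemma indep_hbi:
  assumes "prob_space M" "prob_space.indep_var M borel A borel B"
    "f \<in> borel_measurable borel" "g \<in> borel_measurable borel"
    "has_bochner_integral M (\<lambda>\<omega>. f (A \<omega>)) x" "has_bochner_integral M (\<lambda>\<omega>. g (B \<omega>)) y"
  shows "has_bochner_integral M (\<lambda>\<omega>. (f (A \<omega>) :: real) * g (B \<omega>)) (x*y)"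
proof -
  interpret prob_space M by fact
  have i: "indep_var borel (f \<circ> A) borel (g \<circ> B)"
    using indep_var_compose[OF assms(2) assms(3) assms(4)] .
  have ia: "integrable M (f \<circ> A)" "integrable M (g \<circ> B)"
    using assms(5,6) by (auto simp: has_bochner_integral_iff comp_def)
  have ea: "integral\<^sup>L M (f \<circ> A) = x" "integral\<^sup>L M (g \<circ> B) = y"
    using assms(5,6) by (auto simp: has_bochner_integral_iff comp_def)
  show ?thesis
    using indep_var_lebesgue_integral[OF i ia] indep_var_integrable[OF i ia] ea
    by (simp add: has_bochner_integral_iff comp_def)
qed

lemma prob_lower:
  fixes Z :: "'a \<Rightarrow> real"
  assumes "prob_space M" "Z \<in> borel_measurable M"
    "has_bochner_integral M (\<lambda>\<omega>. p (Z \<omega>)) e"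
    "\<And>w. p w \<le> (if w > 0 then 1 else (0::real))"
  shows "measure M {\<omega> \<in> space M. Z \<omega> > 0} \<ge> e"
proof -
  interpret prob_space M by fact
  let ?A = "{\<omega> \<in> space M. Z \<omega> > 0}"
  have A: "?A \<in> sets M"
  proof -
    have "Z -` {0<..} \<inter> space M \<in> sets M" by (rule measurable_sets[OF assms(2)]) (simp add: borel_open)
    moreover have "Z -` {0<..} \<inter> space M = ?A" by auto
    ultimately show ?thesis by simp
  qed
  have "e = integral\<^sup>L M (\<lambda>\<omega>. p (Z \<omega>))" using assms(3) by (simp add: has_bochner_integral_iff)
  also have "\<dots> \<le> integral\<^sup>L M (indicator ?A)"
  proof (rule integral_mono)
    show "integrable M (\<lambda>\<omega>. p (Z \<omega>))" using assms(3) by (simp add: has_bochner_integral_iff)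
    show "integrable M (indicator ?A :: 'a \<Rightarrow> real)" using A by (intro integrable_real_indicator) (auto simp: emeasure_eq_measure)
    fix \<omega> assume "\<omega> \<in> space M"
    then show "p (Z \<omega>) \<le> indicator ?A \<omega>" using assms(4)[of "Z \<omega>"] by (auto simp: indicator_def)
  qed
  also have "\<dots> = measure M ?A" using A by simp
  finally show ?thesis .
qed

lemma quartic_bound: "(w^3 + 16*w^2 + 20*w - w^4) / 160 \<le> (if w > 0 then 1 else (0::real))"
proof (cases "w > 0")
  case True
  have "160 - (w^3 + 16*w^2 + 20*w - w^4) = (w^2 - w/2 - 10)^2 + (15/4)*(w-4)^2"
    by (simp add: algebra_simps power2_eq_square power4_eq_xxxx power3_eq_cube)
  moreover have "(w^2 - w/2 - 10)^2 + (15/4)*(w-4)^2 \<ge> 0" by simp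
  ultimately have "w^3 + 16*w^2 + 20*w - w^4 \<le> 160" by linarith
  then show ?thesis using True by simp
next
  case False
  have "w^3 + 16*w^2 + 20*w - w^4 = w * ((w+2)^2 * (5 - w))"
    by (simp add: algebra_simps power2_eq_square power4_eq_xxxx power3_eq_cube)
  moreover have "w * ((w+2)^2 * (5 - w)) \<le> 0"
    using False by (intro mult_nonpos_nonneg) auto
  ultimately show ?thesis using False by simp
qed



lemma hbi_eq:
  assumes "has_bochner_integral M f x" "\<And>\<omega>. f \<omega> = g \<omega>" "x = y"
  shows "has_bochner_integral M g y"
proof -
  have "f = g" using assms(2) by auto
  then show ?thesis using assms by simp
qed

lemma hbi_const:
  assumes "prob_space M"
  shows "has_bochner_integral M (\<lambda>_. c) (c::real)"
proof -
  interpret prob_space M by fact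
  show ?thesis by (simp add: has_bochner_integral_iff prob_space)
qed

lemma hbi_poly:
  fixes Z :: "'a \<Rightarrow> real"
  assumes P: "prob_space M"
    and h1: "has_bochner_integral M (\<lambda>\<omega>. Z \<omega>) m1"
    and h2: "has_bochner_integral M (\<lambda>\<omega>. Z \<omega>^2) m2"
    and h3: "has_bochner_integral M (\<lambda>\<omega>. Z \<omega>^3) m3"
    and h4: "has_bochner_integral M (\<lambda>\<omega>. Z \<omega>^4) m4"
  shows "has_bochner_integral M (\<lambda>\<omega>. a4 * Z \<omega>^4 + a3 * Z \<omega>^3 + a2 * Z \<omega>^2 + a1 * Z \<omega> + a0)
           (a4 * m4 + a3 * m3 + a2 * m2 + a1 * m1 + a0)"
  by (intro has_bochner_integral_add has_bochner_integral_mult_right h1 h2 h3 h4 hbi_const[OF P])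

lemma sum_moments:
  fixes Y :: "'i \<Rightarrow> 'a \<Rightarrow> real"
  assumes P: "prob_space M" and fin: "finite J"
  shows "prob_space.indep_vars M (\<lambda>_. borel) Y J \<Longrightarrow>
    (\<And>i. i \<in> J \<Longrightarrow> has_bochner_integral M (\<lambda>\<omega>. Y i \<omega>) 0 \<and> has_bochner_integral M (\<lambda>\<omega>. Y i \<omega>^2) 2
       \<and> has_bochner_integral M (\<lambda>\<omega>. Y i \<omega>^3) 8 \<and> has_bochner_integral M (\<lambda>\<omega>. Y i \<omega>^4) 60) \<Longrightarrow>
    has_bochner_integral M (\<lambda>\<omega>. \<Sum>i\<in>J. Y i \<omega>) 0 \<and>
    has_bochner_integral M (\<lambda>\<omega>. (\<Sum>i\<in>J. Y i \<omega>)^2) (2 * real (card J)) \<and>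
    has_bochner_integral M (\<lambda>\<omega>. (\<Sum>i\<in>J. Y i \<omega>)^3) (8 * real (card J)) \<and>
    has_bochner_integral M (\<lambda>\<omega>. (\<Sum>i\<in>J. Y i \<omega>)^4) (12 * real (card J)^2 + 48 * real (card J))"
  using fin
proof (induction J rule: finite_induct)
  case empty
  then show ?case by (simp add: has_bochner_integral_zero)
next
  case (insert j J)
  interpret prob_space M by fact
  define S where "S = (\<lambda>\<omega>. \<Sum>i\<in>J. Y i \<omega>)"
  define n where "n = real (card J)"
  have indJ: "indep_vars (\<lambda>_. borel) Y J"
    using insert.prems(1) by (rule indep_vars_subset) auto
  have IH: "has_bochner_integral M (\<lambda>\<omega>. S \<omega>^1) 0 \<and> has_bochner_integral M (\<lambda>\<omega>. S \<omega>^2) (2*n) \<and>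
    has_bochner_integral M (\<lambda>\<omega>. S \<omega>^3) (8*n) \<and> has_bochner_integral M (\<lambda>\<omega>. S \<omega>^4) (12*n^2+48*n)"
    using insert.IH[OF indJ insert.prems(2)] unfolding S_def n_def by simp
  have mj: "has_bochner_integral M (\<lambda>\<omega>. Y j \<omega>^1) 0 \<and> has_bochner_integral M (\<lambda>\<omega>. Y j \<omega>^2) 2
       \<and> has_bochner_integral M (\<lambda>\<omega>. Y j \<omega>^3) 8 \<and> has_bochner_integral M (\<lambda>\<omega>. Y j \<omega>^4) 60"
    using insert.prems(2)[of j] by simp
  have ind: "indep_var borel (Y j) borel S"
    unfolding S_def using insert.hyps insert.prems(1) by (intro indep_vars_sum) auto
  have prod: "has_bochner_integral M (\<lambda>\<omega>. Y j \<omega>^a * S \<omega>^b) (x*y)"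
    if "has_bochner_integral M (\<lambda>\<omega>. Y j \<omega>^a) x" "has_bochner_integral M (\<lambda>\<omega>. S \<omega>^b) y" for a b x y
    using indep_hbi[OF P ind, of "\<lambda>t. t^a" "\<lambda>t. t^b" x y] that by simp
  have sum: "\<And>\<omega>. (\<Sum>i\<in>insert j J. Y i \<omega>) = Y j \<omega> + S \<omega>"
    using insert.hyps unfolding S_def by simp
  have c: "real (card (insert j J)) = n + 1" using insert.hyps unfolding n_def by simp
  have e1: "has_bochner_integral M (\<lambda>\<omega>. Y j \<omega>^1 + S \<omega>^1) (0 + 0)"
    using IH mj by (intro has_bochner_integral_add) auto
  have e2: "has_bochner_integral M (\<lambda>\<omega>. Y j \<omega>^2 + 2 * (Y j \<omega>^1 * S \<omega>^1) + S \<omega>^2) (2 + 2 * (0*0) + 2*n)"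
    using IH mj by (intro has_bochner_integral_add has_bochner_integral_mult_right prod) auto
  have e3: "has_bochner_integral M (\<lambda>\<omega>. Y j \<omega>^3 + 3 * (Y j \<omega>^2 * S \<omega>^1) + 3 * (Y j \<omega>^1 * S \<omega>^2) + S \<omega>^3)
     (8 + 3 * (2*0) + 3 * (0*(2*n)) + 8*n)"
    using IH mj by (intro has_bochner_integral_add has_bochner_integral_mult_right prod) auto
  have e4: "has_bochner_integral M (\<lambda>\<omega>. Y j \<omega>^4 + 4 * (Y j \<omega>^3 * S \<omega>^1) + 6 * (Y j \<omega>^2 * S \<omega>^2)
       + 4 * (Y j \<omega>^1 * S \<omega>^3) + S \<omega>^4)
     (60 + 4 * (8*0) + 6 * (2*(2*n)) + 4 * (0*(8*n)) + (12*n^2+48*n))"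
    using IH mj by (intro has_bochner_integral_add has_bochner_integral_mult_right prod) auto
  show ?case unfolding sum c
  proof (intro conjI)
    show "has_bochner_integral M (\<lambda>\<omega>. Y j \<omega> + S \<omega>) 0"
      by (rule hbi_eq[OF e1]) auto
    show "has_bochner_integral M (\<lambda>\<omega>. (Y j \<omega> + S \<omega>)^2) (2 * (n+1))"
      by (rule hbi_eq[OF e2]) (auto simp: algebra_simps power2_eq_square)
    show "has_bochner_integral M (\<lambda>\<omega>. (Y j \<omega> + S \<omega>)^3) (8 * (n+1))"
      by (rule hbi_eq[OF e3]) (auto simp: algebra_simps power2_eq_square power3_eq_cube)
    show "has_bochner_integral M (\<lambda>\<omega>. (Y j \<omega> + S \<omega>)^4) (12 * (n+1)^2 + 48 * (n+1))"
      by (rule hbi_eq[OF e4]) (auto simp: algebra_simps power2_eq_square power3_eq_cube power4_eq_xxxx)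
  qed
qed



lemma normal_sq_moments:
  fixes X :: "'a \<Rightarrow> real"
  assumes P: "prob_space M" and D: "distributed M lborel X std_normal_density"
  shows "has_bochner_integral M (\<lambda>\<omega>. X \<omega>^2 - 1) 0 \<and> has_bochner_integral M (\<lambda>\<omega>. (X \<omega>^2 - 1)^2) 2
       \<and> has_bochner_integral M (\<lambda>\<omega>. (X \<omega>^2 - 1)^3) 8 \<and> has_bochner_integral M (\<lambda>\<omega>. (X \<omega>^2 - 1)^4) 60"
proof -
  have mom: "has_bochner_integral M (\<lambda>\<omega>. (X \<omega>^2)^k) (fact (2*k) / (2^k * fact k))" for k
  proof -
    have int: "integrable M (\<lambda>\<omega>. X \<omega>^(2*k))"
      using distributed_integrable[OF D, of "\<lambda>x. x^(2*k)"] integrable_std_normal_moment[of "2*k"]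
      by simp
    have "integral\<^sup>L M (\<lambda>\<omega>. X \<omega>^(2*k)) = fact (2*k) / (2^k * fact k)"
      using distributed_integral[OF D, of "\<lambda>x. x^(2*k)"] integral_std_normal_moment_even[of k]
      by simp
    with int show ?thesis by (simp add: has_bochner_integral_iff power_mult)
  qed
  have w1: "has_bochner_integral M (\<lambda>\<omega>. X \<omega>^2) 1" using mom[of 1] by simp
  have w2: "has_bochner_integral M (\<lambda>\<omega>. (X \<omega>^2)^2) 3" using mom[of 2] by (simp add: eval_nat_numeral)
  have w3: "has_bochner_integral M (\<lambda>\<omega>. (X \<omega>^2)^3) 15" using mom[of 3] by (simp add: eval_nat_numeral)
  have w4: "has_bochner_integral M (\<lambda>\<omega>. (X \<omega>^2)^4) 105" using mom[of 4] by (simp add: eval_nat_numeral)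
  note poly = hbi_poly[OF P w1 w2 w3 w4]
  show ?thesis
  proof (intro conjI)
    show "has_bochner_integral M (\<lambda>\<omega>. X \<omega>^2 - 1) 0"
      by (rule hbi_eq[OF poly[of 0 0 0 1 "-1"]]) auto
    show "has_bochner_integral M (\<lambda>\<omega>. (X \<omega>^2 - 1)^2) 2"
      by (rule hbi_eq[OF poly[of 0 0 1 "-2" 1]]) (auto simp: algebra_simps power2_eq_square)
    show "has_bochner_integral M (\<lambda>\<omega>. (X \<omega>^2 - 1)^3) 8"
      by (rule hbi_eq[OF poly[of 0 1 "-3" 3 "-1"]]) (auto simp: algebra_simps power2_eq_square power3_eq_cube)
    show "has_bochner_integral M (\<lambda>\<omega>. (X \<omega>^2 - 1)^4) 60"
      by (rule hbi_eq[OF poly[of 1 "-4" 6 "-4" 1]])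
        (auto simp: algebra_simps power2_eq_square power3_eq_cube power4_eq_xxxx)
  qed
qed



lemma hbi_scale:
  assumes "has_bochner_integral M (\<lambda>\<omega>. Z \<omega>^k) m"
  shows "has_bochner_integral M (\<lambda>\<omega>. (Z \<omega> * (u::real))^k) (m * u^k)"
  by (rule hbi_eq[OF has_bochner_integral_mult_left[OF assms, of "u^k"]]) (auto simp: power_mult_distrib)

theorem lemma1:
  fixes M :: "'a measure" and G :: "nat \<Rightarrow> 'a \<Rightarrow> real" and d :: nat
  assumes "prob_space M"
    and "d \<ge> 2"
    and "prob_space.indep_vars M (\<lambda>_. borel) G {..<d}"
    and "\<And>i. i < d \<Longrightarrow> distributed M lborel (G i) std_normal_density"
  shows "measure M {\<omega> \<in> space M. sqrt (\<Sum>i<d. (G i \<omega>)\<^sup>2) > sqrt (real d)} \<ge> 1 / 33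
       \<and> measure M {\<omega> \<in> space M. sqrt (\<Sum>i<d. (G i \<omega>)\<^sup>2) > sqrt (real d + 2)} \<ge> 1 / 397"
proof -
  note P = assms(1)
  interpret prob_space M by fact
  define Y where "Y = (\<lambda>i \<omega>. G i \<omega>^2 - 1)"
  define X where "X = (\<lambda>\<omega>. \<Sum>i<d. Y i \<omega>)"
  define D where "D = real d"
  have D2: "D \<ge> 2" using assms(2) unfolding D_def by simp
  have indY: "indep_vars (\<lambda>_. borel) Y {..<d}"
  proof -
    have "indep_vars (\<lambda>_. borel) (\<lambda>i \<omega>. (\<lambda>x::real. x^2 - 1) (G i \<omega>)) {..<d}"
      by (rule indep_vars_compose2[OF assms(3)]) simp
    then show ?thesis unfolding Y_def by simp
  qed
  have mY: "has_bochner_integral M (\<lambda>\<omega>. Y i \<omega>) 0 \<and> has_bochner_integral M (\<lambda>\<omega>. Y i \<omega>^2) 2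
       \<and> has_bochner_integral M (\<lambda>\<omega>. Y i \<omega>^3) 8 \<and> has_bochner_integral M (\<lambda>\<omega>. Y i \<omega>^4) 60"
    if "i \<in> {..<d}" for i
    unfolding Y_def using normal_sq_moments[OF P assms(4)[of i]] that by simp
  have mX: "has_bochner_integral M (\<lambda>\<omega>. X \<omega>) 0 \<and> has_bochner_integral M (\<lambda>\<omega>. X \<omega>^2) (2*D)
       \<and> has_bochner_integral M (\<lambda>\<omega>. X \<omega>^3) (8*D) \<and> has_bochner_integral M (\<lambda>\<omega>. X \<omega>^4) (12*D^2+48*D)"
    using sum_moments[OF P _ indY mY] unfolding X_def D_def by simp
  have X1: "has_bochner_integral M (\<lambda>\<omega>. X \<omega>) 0" using mX by simp
  have X2: "has_bochner_integral M (\<lambda>\<omega>. X \<omega>^2) (2*D)" using mX by simp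
  have X3: "has_bochner_integral M (\<lambda>\<omega>. X \<omega>^3) (8*D)" using mX by simp
  have X4: "has_bochner_integral M (\<lambda>\<omega>. X \<omega>^4) (12*D^2+48*D)" using mX by simp
  have X1': "has_bochner_integral M (\<lambda>\<omega>. X \<omega>^1) 0" using X1 by simp
  have Xmeas: "X \<in> borel_measurable M" using X1 by (auto simp: has_bochner_integral_iff)
  have sumG: "(\<Sum>i<d. (G i \<omega>)\<^sup>2) = X \<omega> + D" for \<omega>
    unfolding X_def Y_def D_def by (simp add: sum_subtractf)
  define s where "s = sqrt (2*D)"
  define u where "u = 1 / s"
  have s_pos: "s > 0" unfolding s_def using D2 by simp
  have s2: "s^2 = 2*D" unfolding s_def using D2 by simp
  have s_ge: "s \<ge> 2" unfolding s_def using D2 real_sqrt_le_mono[of 4 "2*D"] by simp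
  have u_pos: "u > 0" unfolding u_def using s_pos by simp
  have u_le: "u \<le> 1/2" unfolding u_def using s_ge by (simp add: field_simps)
  have Du: "D * u^2 = 1/2" unfolding u_def using s2 s_pos D2 by (simp add: field_simps power2_eq_square)
  define p where "p = (\<lambda>w::real. (w^3 + 16*w^2 + 20*w - w^4) / 160)"
  have pb: "p w \<le> (if w > 0 then 1 else 0)" for w unfolding p_def by (rule quartic_bound)
  define Z1 where "Z1 = (\<lambda>\<omega>. X \<omega> * u)"
  have h1: "has_bochner_integral M (\<lambda>\<omega>. p (Z1 \<omega>))
     ((-1/160) * ((12*D^2+48*D) * u^4) + (1/160) * (8*D*u^3) + (16/160) * (2*D*u^2) + (20/160) * (0*u^1) + 0)"
    by (rule hbi_eq[OF hbi_poly[OF P has_bochner_integral_mult_left[OF X1, of u] hbi_scale[OF X2, of u]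
           hbi_scale[OF X3, of u] hbi_scale[OF X4, of u], of "-1/160" "1/160" "16/160" "20/160" 0]])
       (simp_all add: p_def Z1_def field_simps)
  have V1: "(-1/160) * ((12*D^2+48*D) * u^4) + (1/160) * (8*D*u^3) + (16/160) * (2*D*u^2) + (20/160) * (0*u^1) + 0
      \<ge> 1/33"
  proof -
    have a: "D^2 * u^4 = 1/4" 
    proof -
      have "D^2 * u^4 = (D*u^2)^2" by (simp add: power_mult_distrib flip: power_mult)
      also have "\<dots> = 1/4" unfolding Du by (simp add: power2_eq_square)
      finally show ?thesis .
    qed
    have b: "D * u^4 = u^2/2" using Du by (simp add: power4_eq_xxxx power2_eq_square algebra_simps)
    have c: "D * u^3 \<ge> 0" using D2 u_pos by simp
    have e: "u^2 \<le> 1/4"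
    proof -
      have "u^2 \<le> (1/2)^2" using u_le u_pos by (intro power_mono) auto
      then show ?thesis by (simp add: power2_eq_square)
    qed
    show ?thesis using a b c e Du by (simp add: algebra_simps)
  qed
  have Z1m: "Z1 \<in> borel_measurable M" unfolding Z1_def using Xmeas by measurable
  have set1: "{\<omega> \<in> space M. sqrt (\<Sum>i<d. (G i \<omega>)\<^sup>2) > sqrt (real d)} = {\<omega> \<in> space M. Z1 \<omega> > 0}"
    unfolding sumG Z1_def using u_pos by (auto simp: D_def zero_less_mult_iff)
  have C1: "measure M {\<omega> \<in> space M. sqrt (\<Sum>i<d. (G i \<omega>)\<^sup>2) > sqrt (real d)} \<ge> 1/33"
    unfolding set1 using prob_lower[OF P Z1m h1 pb] V1 by linarith

  have E1: "has_bochner_integral M (\<lambda>\<omega>. (X \<omega> - 2)^1) (-2)"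
    by (rule hbi_eq[OF hbi_poly[OF P X1 X2 X3 X4, of 0 0 0 1 "-2"]]) auto
  have E2: "has_bochner_integral M (\<lambda>\<omega>. (X \<omega> - 2)^2) (2*D+4)"
    by (rule hbi_eq[OF hbi_poly[OF P X1 X2 X3 X4, of 0 0 1 "-4" 4]]) (auto simp: algebra_simps power2_eq_square)
  have E3: "has_bochner_integral M (\<lambda>\<omega>. (X \<omega> - 2)^3) (-4*D-8)"
    by (rule hbi_eq[OF hbi_poly[OF P X1 X2 X3 X4, of 0 1 "-6" 12 "-8"]])
      (auto simp: algebra_simps power2_eq_square power3_eq_cube)
  have E4: "has_bochner_integral M (\<lambda>\<omega>. (X \<omega> - 2)^4) (12*D^2+32*D+16)"
    by (rule hbi_eq[OF hbi_poly[OF P X1 X2 X3 X4, of 1 "-8" 24 "-32" 16]])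
      (auto simp: algebra_simps power2_eq_square power3_eq_cube power4_eq_xxxx)
  have E1': "has_bochner_integral M (\<lambda>\<omega>. X \<omega> - 2) (-2)" using E1 by simp
  define Z2 where "Z2 = (\<lambda>\<omega>. (X \<omega> - 2) * u)"
  have h2: "has_bochner_integral M (\<lambda>\<omega>. p (Z2 \<omega>))
     ((-1/160) * ((12*D^2+32*D+16) * u^4) + (1/160) * ((-4*D-8)*u^3) + (16/160) * ((2*D+4)*u^2)
       + (20/160) * ((-2)*u^1) + 0)"
    by (rule hbi_eq[OF hbi_poly[OF P has_bochner_integral_mult_left[OF E1', of u] hbi_scale[OF E2, of u]
           hbi_scale[OF E3, of u] hbi_scale[OF E4, of u], of "-1/160" "1/160" "16/160" "20/160" 0]])
       (simp_all add: p_def Z2_def field_simps)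
  have V2: "(-1/160) * ((12*D^2+32*D+16) * u^4) + (1/160) * ((-4*D-8)*u^3) + (16/160) * ((2*D+4)*u^2)
       + (20/160) * ((-2)*u^1) + 0 \<ge> 1/397"
  proof -
    have a: "D^2 * u^4 = 1/4"
    proof -
      have "D^2 * u^4 = (D*u^2)^2" by (simp add: power_mult_distrib flip: power_mult)
      also have "\<dots> = 1/4" unfolding Du by (simp add: power2_eq_square)
      finally show ?thesis .
    qed
    have b: "D * u^4 = u^2/2" using Du by (simp add: power4_eq_xxxx power2_eq_square algebra_simps)
    have c: "D * u^3 = u/2" using Du by (simp add: power3_eq_cube power2_eq_square algebra_simps)
    have eq: "(-1/160) * ((12*D^2+32*D+16) * u^4) + (1/160) * ((-4*D-8)*u^3) + (16/160) * ((2*D+4)*u^2)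
       + (20/160) * ((-2)*u^1) + 0 = (13 - 42*u + 48*u^2 - 8*u^3 - 16*u^4) / 160"
      using a b c Du by (simp add: algebra_simps)
    have e: "u^2 \<le> 1/4"
    proof -
      have "u^2 \<le> (1/2)^2" using u_le u_pos by (intro power_mono) auto
      then show ?thesis by (simp add: power2_eq_square)
    qed
    have f: "u^4 \<le> u^2/4"
    proof -
      have "u^4 = u^2 * u^2" by (simp add: power4_eq_xxxx power2_eq_square)
      also have "\<dots> \<le> u^2 * (1/4)" using e by (intro mult_left_mono) auto
      finally show ?thesis by simp
    qed
    have g: "u^3 \<le> u^2/2"
    proof -
      have "u^3 = u^2 * u" by (simp add: power3_eq_cube power2_eq_square)
      also have "\<dots> \<le> u^2 * (1/2)" using u_le by (intro mult_left_mono) auto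
      finally show ?thesis by simp
    qed
    have h: "40*(u - 21/40)^2 \<ge> 0" by simp
    have h': "40*(u - 21/40)^2 = 40*u^2 - 42*u + 441/40" by (simp add: power2_eq_square algebra_simps)
    show ?thesis unfolding eq using f g h h' by simp
  qed
  have Z2m: "Z2 \<in> borel_measurable M" unfolding Z2_def using Xmeas by measurable
  have set2: "{\<omega> \<in> space M. sqrt (\<Sum>i<d. (G i \<omega>)\<^sup>2) > sqrt (real d + 2)} = {\<omega> \<in> space M. Z2 \<omega> > 0}"
    unfolding sumG Z2_def using u_pos by (auto simp: D_def zero_less_mult_iff)
  have C2: "measure M {\<omega> \<in> space M. sqrt (\<Sum>i<d. (G i \<omega>)\<^sup>2) > sqrt (real d + 2)} \<ge> 1/397"
    unfolding set2 using prob_lower[OF P Z2m h2 pb] V2 by linarith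
  show ?thesis using C1 C2 by simp
qed


end
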